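(* Let $X$ be a real Hilbert space and let $A,B$ be closed convex nonempty subsets of $X$ such that the sets $E$ and $F$ (defined in the context) are nonempty. Consider the following conditions: (i) the couple $(A,B)$ is regular; (ii) the couple $(A,B)$ is boundedly regular; (iii) the couple $(A,B)$ is linearly regular for points bounded away from $E$. Then (iii) $\Leftrightarrow$ (i) $\Rightarrow$ (ii). Moreover, if $E$ is bounded, then (ii) $\Rightarrow$ (i).
   Context: For nonempty sets $S,T\subset X$: $\mathrm{dist}(x,S)=\inf_{s\in S}\|x-s\|$ and $\mathrm{dist}(S,T)=\inf_{s\in S}\mathrm{dist}(s,T)$. Define $E=\{a\in A:\ \mathrm{dist}(a,B)=\mathrm{dist}(A,B)\}$, $F=\{b\in B:\ \mathrm{dist}(b,A)=\mathrm{dist}(A,B)\}$, and let $v=P_{\overline{B-A}}(0)$ (the metric projection of $0$ onto the closure of $B-A=\{b-a: b\in B, a\in A\}$), called the displacement vector. The couple $(A,B)$ (with $E,F$ nonempty) is called: (1) regular if for each $\epsilon>0$ there is $\delta>0$ such that $\mathrm{dist}(x,E)\le\epsilon$ whenever $x\in X$ satisfies $\max\{\mathrm{dist}(x,A),\mathrm{dist}(x,B-v)\}\le\delta$; (2) boundedly regular if for each bounded set $S\subset X$ and each $\epsilon>0$ there is $\delta>0$ such that $\mathrm{dist}(x,E)\le\epsilon$ whenever $x\in S$ satisfies $\max\{\mathrm{dist}(x,A),\mathrm{dist}(x,B-v)\}\le\delta$; (3) linearly regular for points bounded away from $E$ if for each $\epsilon>0$ there is $K>0$ such that $\mathrm{dist}(x,E)\le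 K\max\{\mathrm{dist}(x,A),\mathrm{dist}(x,B-v)\}$ whenever $x\in X$ satisfies $\mathrm{dist}(x,E)\ge\epsilon$. *)

theory Defs
  imports "HOL-Analysis.Analysis"
begin

definition nearE :: "'a::real_normed_vector set \<Rightarrow> 'a set \<Rightarrow> 'a set" where
  "nearE A B = {a \<in> A. infdist a B = setdist A B}"

definition nearF :: "'a::real_normed_vector set \<Rightarrow> 'a set \<Rightarrow> 'a set" where
  "nearF A B = {b \<in> B. infdist b A = setdist A B}"

definition diffset :: "'a::real_normed_vector set \<Rightarrow> 'a set \<Rightarrow> 'a set" where
  "diffset B A = {b - a | b a. b \<in> B \<and> a \<in> A}"

(* metric projection of 0 onto closure (B - A): the (unique) element of minimal norm *)
definition displacement :: "'a::real_normed_vector set \<Rightarrow> 'a set \<Rightarrow> 'a" where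
  "displacement A B =
     (THE v. v \<in> closure (diffset B A) \<and> (\<forall>w \<in> closure (diffset B A). norm v \<le> norm w))"

definition regular_couple :: "'a::real_normed_vector set \<Rightarrow> 'a set \<Rightarrow> bool" where
  "regular_couple A B \<longleftrightarrow>
     (\<forall>\<epsilon>>0. \<exists>\<delta>>0. \<forall>x.
        max (infdist x A) (infdist x ((\<lambda>b. b - displacement A B) ` B)) \<le> \<delta>
        \<longrightarrow> infdist x (nearE A B) \<le> \<epsilon>)"

definition boundedly_regular_couple :: "'a::real_normed_vector set \<Rightarrow> 'a set \<Rightarrow> bool" where
  "boundedly_regular_couple A B \<longleftrightarrow>
     (\<forall>S. bounded S \<longrightarrow> (\<forall>\<epsilon>>0. \<exists>\<delta>>0. \<forall>x\<in>S.
        max (infdist x A) (infdist x ((\<lambda>b. b - displacement A B) ` B)) \<le> \<delta>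
        \<longrightarrow> infdist x (nearE A B) \<le> \<epsilon>))"

definition linearly_regular_away_couple :: "'a::real_normed_vector set \<Rightarrow> 'a set \<Rightarrow> bool" where
  "linearly_regular_away_couple A B \<longleftrightarrow>
     (\<forall>\<epsilon>>0. \<exists>K>0. \<forall>x.
        infdist x (nearE A B) \<ge> \<epsilon> \<longrightarrow>
        infdist x (nearE A B) \<le> K * max (infdist x A) (infdist x ((\<lambda>b. b - displacement A B) ` B)))"

end

theory Submission
  imports Defs
begin

lemma infdist_approx:
  assumes "A \<noteq> {}" "0 < e"
  shows "\<exists>a\<in>A. dist x a < infdist x A + e"
proof -
  have "Inf ((\<lambda>a. dist x a) ` A) < infdist x A + e"
    using assms infdist_notempty by (metis less_add_same_cancel1)
  then obtain y where "y \<in> (\<lambda>a. dist x a) ` A" "y < infdist x A + e"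
    using cInf_lessD[of "(\<lambda>a. dist x a) ` A"] assms(1) by blast
  then show ?thesis by blast
qed

lemma infdist_seg:
  fixes C :: "'a::real_normed_vector set"
  assumes "convex C" "e \<in> C" "0 \<le> t" "t \<le> 1"
  shows "infdist (e + t *\<^sub>R (x - e)) C \<le> t * infdist x C"
proof (rule field_le_epsilon)
  fix \<eta> :: real assume "0 < \<eta>"
  obtain c where c: "c \<in> C" "dist x c < infdist x C + \<eta>"
    using infdist_approx[of C \<eta> x] assms \<open>0 < \<eta>\<close> by blast
  have "e + t *\<^sub>R (c - e) = (1 - t) *\<^sub>R e + t *\<^sub>R c" by (simp add: algebra_simps)
  also have "\<dots> \<in> C" by (rule convexD[OF assms(1) assms(2) c(1)]) (use assms in auto)
  finally have m: "e + t *\<^sub>R (c - e) \<in> C" .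
  have "dist (e + t *\<^sub>R (x - e)) (e + t *\<^sub>R (c - e)) = t * dist x c"
  proof -
    have "(e + t *\<^sub>R (x - e)) - (e + t *\<^sub>R (c - e)) = t *\<^sub>R (x - c)" by (simp add: algebra_simps)
    then show ?thesis using assms(3) by (simp add: dist_norm)
  qed
  also have "\<dots> \<le> t * (infdist x C + \<eta>)" using c assms(3) by (simp add: mult_left_mono)
  also have "\<dots> \<le> t * infdist x C + \<eta>" using assms(3,4) \<open>0 < \<eta>\<close>
    by (simp add: distrib_left mult_left_le_one_le less_imp_le)
  finally show "infdist (e + t *\<^sub>R (x - e)) C \<le> t * infdist x C + \<eta>"
    using infdist_le2[OF m] by blast
qed

lemma para:
  fixes C :: "'a::real_inner set"
  assumes "convex C" "\<forall>z\<in>C. d \<le> norm z" "0 \<le> d" "u \<in> C" "w \<in> C"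
  shows "(norm (u - w))\<^sup>2 \<le> 2 * (norm u)\<^sup>2 + 2 * (norm w)\<^sup>2 - 4 * d\<^sup>2"
proof -
  have "(1/2) *\<^sub>R u + (1/2) *\<^sub>R w \<in> C" by (rule convexD[OF assms(1) assms(4) assms(5)]) auto
  hence "d \<le> norm ((1/2) *\<^sub>R (u + w))" using assms(2) by (simp add: algebra_simps)
  hence "d \<le> norm (u + w) / 2" by simp
  hence "(2*d)\<^sup>2 \<le> (norm (u + w))\<^sup>2" using assms(3) by (intro power_mono) auto
  moreover have "(norm (u - w))\<^sup>2 + (norm (u + w))\<^sup>2 = 2 * (norm u)\<^sup>2 + 2 * (norm w)\<^sup>2"
    by (simp add: power2_norm_eq_inner inner_diff inner_add inner_commute)
  ultimately show ?thesis by (simp add: power_mult_distrib)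
qed

lemma minnorm_exists:
  fixes C :: "'a::{real_inner, complete_space} set"
  assumes "closed C" "convex C" "C \<noteq> {}"
  shows "\<exists>v\<in>C. \<forall>w\<in>C. norm v \<le> norm w"
proof -
  define d where "d = Inf (norm ` C)"
  have bdd: "bdd_below (norm ` C)" by (rule bdd_belowI[of _ 0]) auto
  have dle: "\<forall>z\<in>C. d \<le> norm z" unfolding d_def using bdd by (auto intro: cInf_lower)
  have d0: "0 \<le> d" unfolding d_def using assms(3) by (auto intro: cInf_greatest)
  have "\<forall>n. \<exists>u\<in>C. norm u < sqrt (d\<^sup>2 + 1 / real (Suc n))"
  proof
    fix n
    have "sqrt (d\<^sup>2) < sqrt (d\<^sup>2 + 1 / real (Suc n))"
      by (rule real_sqrt_less_mono) simp
    then have "d < sqrt (d\<^sup>2 + 1 / real (Suc n))" using d0 by simp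
    then have "Inf (norm ` C) < sqrt (d\<^sup>2 + 1 / real (Suc n))" by (simp add: d_def)
    then show "\<exists>u\<in>C. norm u < sqrt (d\<^sup>2 + 1 / real (Suc n))"
    proof -
      obtain y where "y \<in> norm ` C" "y < sqrt (d\<^sup>2 + 1 / real (Suc n))"
        using cInf_lessD[of "norm ` C"] assms(3) \<open>Inf (norm ` C) < _\<close> by blast
      then show ?thesis by blast
    qed
  qed
  then have "\<exists>u. \<forall>n. u n \<in> C \<and> norm (u n) < sqrt (d\<^sup>2 + 1 / real (Suc n))"
    unfolding Bex_def by (rule choice)
  then obtain u where u: "\<And>n. u n \<in> C" "\<And>n. norm (u n) < sqrt (d\<^sup>2 + 1 / real (Suc n))"
    by blast
  have u2: "(norm (u n))\<^sup>2 < d\<^sup>2 + 1 / real (Suc n)" for n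
  proof -
    have "(norm (u n))\<^sup>2 < (sqrt (d\<^sup>2 + 1 / real (Suc n)))\<^sup>2"
      using u(2)[of n] by (intro power_strict_mono) auto
    then show ?thesis by (simp add: add_nonneg_nonneg)
  qed
  have "Cauchy u"
  proof (rule CauchyI)
    fix e :: real assume "0 < e"
    obtain M where M: "4 / e\<^sup>2 < real M" using reals_Archimedean2 by blast
    have "\<forall>m\<ge>M. \<forall>n\<ge>M. norm (u m - u n) < e"
    proof (intro allI impI)
      fix m n assume mn: "M \<le> m" "M \<le> n"
      have "(norm (u m - u n))\<^sup>2 \<le> 2 * (norm (u m))\<^sup>2 + 2 * (norm (u n))\<^sup>2 - 4 * d\<^sup>2"
        by (rule para[OF assms(2) dle d0 u(1) u(1)])
      also have "\<dots> < 2 / real (Suc m) + 2 / real (Suc n)" using u2[of m] u2[of n] by linarith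
      also have "\<dots> \<le> 4 / real (Suc M)"
      proof -
        have "1 / real (Suc m) \<le> 1 / real (Suc M)" "1 / real (Suc n) \<le> 1 / real (Suc M)"
          using mn by (auto intro!: divide_left_mono)
        then show ?thesis by simp
      qed
      also have "\<dots> < e\<^sup>2"
      proof -
        have "4 / e\<^sup>2 < real (Suc M)" using M by simp
        then have "4 < e\<^sup>2 * real (Suc M)" using \<open>0 < e\<close> by (simp add: divide_less_eq mult.commute)
        then show ?thesis by (simp add: divide_less_eq)
      qed
      finally show "norm (u m - u n) < e" using \<open>0 < e\<close> by (simp add: power_less_imp_less_base)
    qed
    then show "\<exists>M. \<forall>m\<ge>M. \<forall>n\<ge>M. norm (u m - u n) < e" by blast
  qed
  then obtain v where v: "u \<longlonglongrightarrow> v" using Cauchy_convergent_iff convergent_def by blast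
  have vC: "v \<in> C" using closed_sequentially[OF assms(1) u(1) v] .
  have "norm v \<le> d"
  proof (rule LIMSEQ_le)
    show "(\<lambda>n. norm (u n)) \<longlonglongrightarrow> norm v" using v by (rule tendsto_norm)
    have "(\<lambda>n. sqrt (d\<^sup>2 + inverse (real (Suc n)))) \<longlonglongrightarrow> sqrt (d\<^sup>2 + 0)"
      by (intro tendsto_intros LIMSEQ_inverse_real_of_nat)
    then show "(\<lambda>n. sqrt (d\<^sup>2 + 1 / real (Suc n))) \<longlonglongrightarrow> d" using d0 by (simp add: inverse_eq_divide)
    show "\<exists>N. \<forall>n\<ge>N. norm (u n) \<le> sqrt (d\<^sup>2 + 1 / real (Suc n))" using u(2) less_imp_le by blast
  qed
  then show ?thesis using vC dle by force
qed

lemma convex_diffset: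
  assumes "convex A" "convex B"
  shows "convex (diffset B A)"
proof -
  have "diffset B A = (\<Union>x\<in> B. \<Union>y \<in> A. {x - y})" unfolding diffset_def by auto
  then show ?thesis using convex_differences[OF assms(2) assms(1)] by simp
qed

lemma displacement_prop:
  fixes A B :: "'a::{real_inner, complete_space} set"
  assumes "convex A" "A \<noteq> {}" "convex B" "B \<noteq> {}"
  shows "displacement A B \<in> closure (diffset B A) \<and>
     (\<forall>w \<in> closure (diffset B A). norm (displacement A B) \<le> norm w)"
proof -
  let ?C = "closure (diffset B A)"
  have cC: "convex ?C" using convex_closure convex_diffset assms by blast
  have ne: "?C \<noteq> {}" using assms unfolding diffset_def by auto
  obtain v where v: "v \<in> ?C" "\<forall>w\<in>?C. norm v \<le> norm w"
    using minnorm_exists[OF closed_closure cC ne] by blast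
  have "\<exists>!v. v \<in> ?C \<and> (\<forall>w \<in> ?C. norm v \<le> norm w)"
  proof (rule ex1I[of _ v])
    show "v \<in> ?C \<and> (\<forall>w \<in> ?C. norm v \<le> norm w)" using v by blast
    fix v' assume v': "v' \<in> ?C \<and> (\<forall>w \<in> ?C. norm v' \<le> norm w)"
    have eq: "norm v' = norm v" using v v' by (meson order_antisym)
    have "(norm (v' - v))\<^sup>2 \<le> 2 * (norm v')\<^sup>2 + 2 * (norm v)\<^sup>2 - 4 * (norm v)\<^sup>2"
      by (rule para[OF cC]) (use v v' in auto)
    then have "(norm (v' - v))\<^sup>2 \<le> 0" using eq by simp
    then show "v' = v" by simp
  qed
  then show ?thesis unfolding displacement_def by (rule theI')
qed

lemma key:
  fixes A B :: "'a::{real_inner, complete_space} set"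
  assumes "closed B" "convex A" "A \<noteq> {}" "convex B" "B \<noteq> {}" "a \<in> nearE A B"
  shows "a + displacement A B \<in> B"
proof -
  define v where "v = displacement A B"
  define d where "d = setdist A B"
  define C where "C = closure (diffset B A)"
  have vp: "v \<in> C" "\<forall>w\<in>C. norm v \<le> norm w"
    using displacement_prop[OF assms(2,3,4,5)] unfolding v_def C_def by auto
  have cC: "convex C" unfolding C_def using convex_closure convex_diffset assms by blast
  have d0: "0 \<le> d" unfolding d_def by (rule setdist_pos_le)
  have sub: "diffset B A \<subseteq> C" unfolding C_def by (rule closure_subset)
  have "diffset B A \<subseteq> {w. d \<le> norm w}"
  proof
    fix w assume "w \<in> diffset B A"
    then obtain b a where w: "w = b - a" "b \<in> B" "a \<in> A" unfolding diffset_def by blast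
    have "d \<le> dist a b" unfolding d_def using w by (intro setdist_le_dist)
    then show "w \<in> {w. d \<le> norm w}" using w by (simp add: dist_norm norm_minus_commute)
  qed
  moreover have "closed {w::'a. d \<le> norm w}" by (intro closed_Collect_le continuous_intros)
  ultimately have "C \<subseteq> {w. d \<le> norm w}" unfolding C_def by (rule closure_minimal)
  then have dv: "d \<le> norm v" using vp by blast
  have aA: "a \<in> A" and ad: "infdist a B = d" using assms(6) unfolding nearE_def d_def by auto
  have "a + v \<in> closure B"
    unfolding closure_approachable
  proof (intro allI impI)
    fix \<eta> :: real assume "0 < \<eta>"
    define \<rho> where "\<rho> = min 1 (\<eta>\<^sup>2 / (4 * d + 4))"
    have r0: "0 < \<rho>" unfolding \<rho>_def using \<open>0 < \<eta>\<close> d0 by simp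
    have r1: "\<rho> \<le> 1" unfolding \<rho>_def by simp
    have r2: "\<rho> * (4 * d + 4) \<le> \<eta>\<^sup>2" unfolding \<rho>_def using d0
      by (metis min.cobounded2 pos_le_divide_eq add_nonneg_pos mult_nonneg_nonneg zero_le_numeral zero_less_numeral)
    obtain b where b: "b \<in> B" "dist a b < d + \<rho>" using infdist_approx[OF assms(5) r0, of a] ad by auto
    have uC: "b - a \<in> C" using sub b aA unfolding diffset_def by blast
    have "(norm ((b - a) - v))\<^sup>2 \<le> 2 * (norm (b - a))\<^sup>2 + 2 * (norm v)\<^sup>2 - 4 * (norm v)\<^sup>2"
      by (rule para[OF cC vp(2) norm_ge_zero uC vp(1)])
    also have "\<dots> = 2 * (norm (b - a))\<^sup>2 - 2 * (norm v)\<^sup>2" by simp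
    also have "\<dots> \<le> 2 * (d + \<rho>)\<^sup>2 - 2 * d\<^sup>2"
    proof -
      have "norm (b - a) \<le> d + \<rho>" using b by (simp add: dist_norm norm_minus_commute)
      then have "(norm (b - a))\<^sup>2 \<le> (d + \<rho>)\<^sup>2" by (intro power_mono) auto
      moreover have "d\<^sup>2 \<le> (norm v)\<^sup>2" using dv d0 by (intro power_mono) auto
      ultimately show ?thesis by linarith
    qed
    also have "\<dots> = \<rho> * (4 * d + 2 * \<rho>)" by (simp add: power2_eq_square algebra_simps)
    also have "\<dots> \<le> \<rho> * (4 * d + 2)" using r0 r1 by (intro mult_left_mono) auto
    also have "\<dots> < \<rho> * (4 * d + 4)" using r0 by simp
    also have "\<dots> \<le> \<eta>\<^sup>2" by (rule r2)
    finally have "(norm ((b - a) - v))\<^sup>2 < \<eta>\<^sup>2" .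
    then have "norm ((b - a) - v) < \<eta>" using \<open>0 < \<eta>\<close> by (simp add: power_less_imp_less_base)
    moreover have "dist b (a + v) = norm ((b - a) - v)" by (simp add: dist_norm algebra_simps)
    ultimately have "dist b (a + v) < \<eta>" by simp
    then show "\<exists>y\<in>B. dist y (a + v) < \<eta>" using b(1) by blast
  qed
  then show ?thesis using assms(1) v_def by simp
qed

lemma core:
  fixes E :: "'a::real_normed_vector set" and f :: "'a \<Rightarrow> real"
  assumes "E \<noteq> {}" "\<And>e t. e \<in> E \<Longrightarrow> 0 \<le> t \<Longrightarrow> t \<le> 1 \<Longrightarrow> f (e + t *\<^sub>R (x - e)) \<le> t * f x"
    "0 < \<epsilon>" "\<epsilon> \<le> infdist x E"
  shows "\<exists>y e. e \<in> E \<and> 3*\<epsilon>/4 \<le> infdist y E \<and> f y \<le> (\<epsilon> / infdist x E) * f x \<and> dist y e \<le> 2*\<epsilon>"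
proof -
  define D where "D = infdist x E"
  have D0: "0 < D" using assms D_def by simp
  obtain e where e: "e \<in> E" "dist x e < D + \<epsilon>/4" using infdist_approx[OF assms(1), of "\<epsilon>/4" x] assms(3) D_def by auto
  define t where "t = \<epsilon> / D"
  have t0: "0 < t" "t \<le> 1" using D0 assms(3,4) D_def by (auto simp: t_def)
  have tD: "t * D = \<epsilon>" using D0 by (simp add: t_def)
  define y where "y = e + t *\<^sub>R (x - e)"
  have "x - y = (1 - t) *\<^sub>R (x - e)" by (simp add: y_def algebra_simps)
  then have dxy: "dist x y = (1 - t) * dist x e" using t0 by (simp add: dist_norm)
  have "(1 - t) * dist x e \<le> (1 - t) * (D + \<epsilon>/4)" using t0 e by (intro mult_left_mono) auto
  moreover have "D \<le> infdist y E + dist x y" unfolding D_def by (rule infdist_triangle)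
  ultimately have "D - (1 - t) * (D + \<epsilon>/4) \<le> infdist y E" using dxy by linarith
  moreover have "D - (1 - t) * (D + \<epsilon>/4) = t * D - \<epsilon>/4 + t * (\<epsilon>/4)"
    by (simp only: left_diff_distrib distrib_left mult_1_left)
  moreover have "0 \<le> t * (\<epsilon>/4)" using t0 assms(3) by simp
  ultimately have i1: "3*\<epsilon>/4 \<le> infdist y E" using tD by linarith
  have "y - e = t *\<^sub>R (x - e)" by (simp add: y_def)
  then have "dist y e = t * dist x e" using t0 by (simp add: dist_norm)
  also have "\<dots> \<le> t * (D + \<epsilon>/4)" using t0 e by (intro mult_left_mono) auto
  also have "\<dots> = \<epsilon> + t * (\<epsilon>/4)" by (simp add: distrib_left tD)
  also have "\<dots> \<le> 2 * \<epsilon>"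
  proof -
    have "t * (\<epsilon>/4) \<le> 1 * (\<epsilon>/4)" using t0 assms(3) by (intro mult_right_mono) auto
    then show ?thesis using assms(3) by linarith
  qed
  finally have i2: "dist y e \<le> 2 * \<epsilon>" .
  have i3: "f y \<le> (\<epsilon> / D) * f x" using assms(2)[OF e(1) less_imp_le[OF t0(1)] t0(2)] by (simp add: y_def t_def)
  show ?thesis using i1 i2 i3 e(1) D_def by blast
qed

theorem proposition3p2:
  fixes A B :: "'a::{real_inner, complete_space} set"
  assumes "closed A" "convex A" "A \<noteq> {}"
    and "closed B" "convex B" "B \<noteq> {}"
    and "nearE A B \<noteq> {}" "nearF A B \<noteq> {}"
  shows "(linearly_regular_away_couple A B \<longleftrightarrow> regular_couple A B)
       \<and> (regular_couple A B \<longrightarrow> boundedly_regular_couple A B)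
       \<and> (bounded (nearE A B) \<longrightarrow> boundedly_regular_couple A B \<longrightarrow> regular_couple A B)"
proof -
  define v where "v = displacement A B"
  define B' where "B' = (\<lambda>b. b - v) ` B"
  define E where "E = nearE A B"
  define f where "f = (\<lambda>x. max (infdist x A) (infdist x B'))"
  have Ene: "E \<noteq> {}" using assms(7) E_def by simp
  have EA: "E \<subseteq> A" unfolding E_def nearE_def by auto
  have EB: "e \<in> B'" if "e \<in> E" for e
  proof -
    have "e + v \<in> B" unfolding v_def
      by (rule key[OF assms(4,2,3,5,6)]) (use that E_def in simp)
    then have "(e + v) - v \<in> B'" unfolding B'_def by blast
    then show ?thesis by simp
  qed
  have cB': "convex B'" unfolding B'_def using assms(5) by simp
  have f0: "0 \<le> f x" for x unfolding f_def by (simp add: le_max_iff_disj infdist_nonneg)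
  have seg: "f (e + t *\<^sub>R (x - e)) \<le> t * f x" if "e \<in> E" "0 \<le> t" "t \<le> 1" for e t x
  proof -
    have "infdist (e + t *\<^sub>R (x - e)) A \<le> t * infdist x A"
      using infdist_seg[OF assms(2)] that EA by blast
    also have "\<dots> \<le> t * f x" unfolding f_def using that by (intro mult_left_mono) auto
    finally have 1: "infdist (e + t *\<^sub>R (x - e)) A \<le> t * f x" .
    have "infdist (e + t *\<^sub>R (x - e)) B' \<le> t * infdist x B'"
      using infdist_seg[OF cB'] that EB by blast
    also have "\<dots> \<le> t * f x" unfolding f_def using that by (intro mult_left_mono) auto
    finally have 2: "infdist (e + t *\<^sub>R (x - e)) B' \<le> t * f x" .
    show ?thesis using 1 2 unfolding f_def by simp
  qed
  have R: "regular_couple A B \<longleftrightarrow> (\<forall>\<epsilon>>0. \<exists>\<delta>>0. \<forall>x. f x \<le> \<delta> \<longrightarrow> infdist x E \<le> \<epsilon>)"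
    unfolding regular_couple_def f_def E_def B'_def v_def by (rule refl)
  have BR: "boundedly_regular_couple A B \<longleftrightarrow>
     (\<forall>S. bounded S \<longrightarrow> (\<forall>\<epsilon>>0. \<exists>\<delta>>0. \<forall>x\<in>S. f x \<le> \<delta> \<longrightarrow> infdist x E \<le> \<epsilon>))"
    unfolding boundedly_regular_couple_def f_def E_def B'_def v_def by (rule refl)
  have LR: "linearly_regular_away_couple A B \<longleftrightarrow>
     (\<forall>\<epsilon>>0. \<exists>K>0. \<forall>x. infdist x E \<ge> \<epsilon> \<longrightarrow> infdist x E \<le> K * f x)"
    unfolding linearly_regular_away_couple_def f_def E_def B'_def v_def by (rule refl)
  have P1: "regular_couple A B" if "linearly_regular_away_couple A B"
    unfolding R
  proof (intro allI impI)
    fix \<epsilon> :: real assume "0 < \<epsilon>"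
    have L: "\<forall>\<epsilon>>0. \<exists>K>0. \<forall>x. infdist x E \<ge> \<epsilon> \<longrightarrow> infdist x E \<le> K * f x"
      using that unfolding LR .
    obtain K where K: "K > 0" "\<forall>x. infdist x E \<ge> \<epsilon> \<longrightarrow> infdist x E \<le> K * f x"
      using L \<open>0 < \<epsilon>\<close> by blast
    have "\<forall>x. f x \<le> \<epsilon> / K \<longrightarrow> infdist x E \<le> \<epsilon>"
    proof (intro allI impI)
      fix x assume fx: "f x \<le> \<epsilon> / K"
      show "infdist x E \<le> \<epsilon>"
      proof (cases "infdist x E \<ge> \<epsilon>")
        case True
        then have "infdist x E \<le> K * f x" using K(2) by blast
        also have "\<dots> \<le> K * (\<epsilon> / K)" using fx K(1) by (intro mult_left_mono) auto
        also have "\<dots> = \<epsilon>" using K(1) by simp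
        finally show ?thesis .
      qed simp
    qed
    moreover have "0 < \<epsilon> / K" using \<open>0 < \<epsilon>\<close> K(1) by simp
    ultimately show "\<exists>\<delta>>0. \<forall>x. f x \<le> \<delta> \<longrightarrow> infdist x E \<le> \<epsilon>" by blast
  qed
  have P2: "linearly_regular_away_couple A B" if "regular_couple A B"
    unfolding LR
  proof (intro allI impI)
    fix \<epsilon> :: real assume e0: "0 < \<epsilon>"
    have L: "\<forall>\<epsilon>>0. \<exists>\<delta>>0. \<forall>x. f x \<le> \<delta> \<longrightarrow> infdist x E \<le> \<epsilon>"
      using that unfolding R .
    have "\<epsilon>/2 > 0" using e0 by simp
    then obtain \<delta> where d: "\<delta> > 0" "\<forall>x. f x \<le> \<delta> \<longrightarrow> infdist x E \<le> \<epsilon>/2"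
      using L by blast
    have "\<forall>x. infdist x E \<ge> \<epsilon> \<longrightarrow> infdist x E \<le> (\<epsilon>/\<delta>) * f x"
    proof (intro allI impI)
      fix x assume xe: "infdist x E \<ge> \<epsilon>"
      obtain y e where ye: "3*\<epsilon>/4 \<le> infdist y E" "f y \<le> (\<epsilon> / infdist x E) * f x"
        using core[OF Ene seg e0 xe] by blast
      have D0: "0 < infdist x E" using xe e0 by linarith
      have "\<not> f y \<le> \<delta>" using d(2)[rule_format, of y] ye(1) e0 by linarith
      then have "\<delta> < (\<epsilon> / infdist x E) * f x" using ye(2) by linarith
      then have "\<delta> * infdist x E < \<epsilon> * f x" using D0 by (simp add: field_simps)
      then have "infdist x E < (\<epsilon> * f x) / \<delta>" using d(1) by (simp add: field_simps)
      then show "infdist x E \<le> (\<epsilon>/\<delta>) * f x" by simp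
    qed
    then show "\<exists>K>0. \<forall>x. infdist x E \<ge> \<epsilon> \<longrightarrow> infdist x E \<le> K * f x"
      using e0 d(1) by (intro exI[of _ "\<epsilon>/\<delta>"]) auto
  qed
  have P3: "boundedly_regular_couple A B" if "regular_couple A B"
  proof -
    have L: "\<forall>\<epsilon>>0. \<exists>\<delta>>0. \<forall>x. f x \<le> \<delta> \<longrightarrow> infdist x E \<le> \<epsilon>"
      using that unfolding R .
    have "\<forall>S. bounded S \<longrightarrow> (\<forall>\<epsilon>>0. \<exists>\<delta>>0. \<forall>x\<in>S. f x \<le> \<delta> \<longrightarrow> infdist x E \<le> \<epsilon>)"
      using L by fast
    then show ?thesis unfolding BR .
  qed
  have P4: "regular_couple A B" if "bounded E" "boundedly_regular_couple A B"
    unfolding R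
  proof (intro allI impI)
    fix \<epsilon> :: real assume e0: "0 < \<epsilon>"
    define \<epsilon>' where "\<epsilon>' = min \<epsilon> 1"
    have e'0: "0 < \<epsilon>'" "\<epsilon>' \<le> \<epsilon>" "\<epsilon>' \<le> 1" using e0 by (auto simp: \<epsilon>'_def)
    have "\<exists>a. \<forall>z\<in>E. norm z \<le> a" using that(1) unfolding bounded_iff .
    then obtain R0 where R0: "\<And>z. z \<in> E \<Longrightarrow> norm z \<le> R0" by blast
    have "bounded (cball (0::'a) (R0 + 2))" by simp
    moreover have L: "\<forall>S. bounded S \<longrightarrow> (\<forall>\<epsilon>>0. \<exists>\<delta>>0. \<forall>x\<in>S. f x \<le> \<delta> \<longrightarrow> infdist x E \<le> \<epsilon>)"
      using that(2) unfolding BR .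
    moreover have "\<epsilon>'/2 > 0" using e'0 by simp
    ultimately obtain \<delta> where d: "\<delta> > 0" "\<forall>x\<in>cball 0 (R0 + 2). f x \<le> \<delta> \<longrightarrow> infdist x E \<le> \<epsilon>'/2"
      by blast
    have "\<forall>x. f x \<le> \<delta> \<longrightarrow> infdist x E \<le> \<epsilon>"
    proof (intro allI impI)
      fix x assume fx: "f x \<le> \<delta>"
      show "infdist x E \<le> \<epsilon>"
      proof (rule ccontr)
        assume "\<not> infdist x E \<le> \<epsilon>"
        then have xe: "\<epsilon>' \<le> infdist x E" using e'0 by linarith
        obtain y e where ye: "e \<in> E" "3*\<epsilon>'/4 \<le> infdist y E" "f y \<le> (\<epsilon>' / infdist x E) * f x"
          "dist y e \<le> 2*\<epsilon>'"
          using core[OF Ene seg e'0(1) xe] by blast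
        have D0: "0 < infdist x E" using xe e'0 by linarith
        have "\<epsilon>' / infdist x E \<le> 1" using xe D0 by simp
        then have "(\<epsilon>' / infdist x E) * f x \<le> 1 * f x" using f0[of x] by (intro mult_right_mono) auto
        then have fy: "f y \<le> \<delta>" using ye(3) fx by linarith
        have "norm y \<le> norm e + dist y e" by (metis dist_norm norm_triangle_sub)
        then have "norm y \<le> R0 + 2" using R0[OF ye(1)] ye(4) e'0(3) by linarith
        then have "y \<in> cball 0 (R0 + 2)" by simp
        then have "infdist y E \<le> \<epsilon>'/2" using d(2) fy by blast
        then show False using ye(2) e'0(1) by linarith
      qed
    qed
    then show "\<exists>\<delta>>0. \<forall>x. f x \<le> \<delta> \<longrightarrow> infdist x E \<le> \<epsilon>" using d(1) by blast
  qed
  show ?thesis using P1 P2 P3 P4 E_def by blast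
qed

end
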